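(* Let $n\ge2$, $c\in(0,\infty)$, and let $\Sigma_n\in\mathbb{R}^{n\times n}$ have entries $$(\Sigma_n)_{ij}=\frac{\pi}{i+j}+c\,\frac{4\pi^2}{(i+1)(j+1)}\ \text{ if } c\in(0,1],\qquad (\Sigma_n)_{ij}=\frac{\pi}{c(i+j)}+\frac{4\pi^2}{(i+1)(j+1)}\ \text{ if } c\in(1,\infty).$$ Then $\Sigma_n=LU$ with $L=(l_{ij})$, $U=(u_{ij})$ given by $l_{ij}=0$ for $i<j$, $$l_{ij}=\frac{\prod_{k=1}^{j-1}(i-k)\prod_{k=1}^{j}(j+k)}{\prod_{k=1}^{j-1}(j-k)\prod_{k=1}^{j}(i+k)}\quad(i\ge j),$$ $u_{ij}=0$ for $i>j$, $u_{1j}=\frac{\pi(1+2c\pi)}{j+1}$ if $c\in(0,1]$, $u_{1j}=\frac{\pi(1+2c\pi)}{c(j+1)}$ if $c\in(1,\infty)$, and for $1<i\le j$: $$u_{ij}=\frac{\pi\prod_{k=1}^{i-1}(i-k)(j-k)}{(i+j)\prod_{k=1}^{i-1}(i+k)\prod_{k=1}^{i-1}(j+k)}\ \ (c\in(0,1]),\qquad u_{ij}=\frac{\pi\prod_{k=1}^{i-1}(i-k)(j-k)}{c(i+j)\prod_{k=1}^{i-1}(i+k)\prod_{k=1}^{i-1}(j+k)}\ \ (c\in(1,\infty)).$$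
   Context: $\Sigma_n$ is the asymptotic covariance matrix, in the critical regime $t\delta_t^d\to c$, of the "vector of natural increasing powers" $(\tilde L_t^{(0)},\dots,\tilde L_t^{(n-1)})$ of normalized length power functionals in dimension $d=2$ (so $\tau_i=i-1$, $\kappa_2=\pi$) for a window of volume $1$. *)

theory Defs
  imports "HOL-Analysis.Analysis"
begin

text \<open>Matrices of size n x n are represented as functions nat => nat => real,
  with indices ranging over {1..n} (1-based, as in the paper).\<close>

definition Sigma_mat :: "real \<Rightarrow> nat \<Rightarrow> nat \<Rightarrow> real" where
  "Sigma_mat c i j =
     (if c \<le> 1 then pi / real (i + j) + c * (4 * pi^2) / (real (i + 1) * real (j + 1))
      else pi / (c * real (i + j)) + (4 * pi^2) / (real (i + 1) * real (j + 1)))"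

definition L_mat :: "nat \<Rightarrow> nat \<Rightarrow> real" where
  "L_mat i j =
     (if i < j then 0
      else ((\<Prod>k = 1..j - 1. real i - real k) * (\<Prod>k = 1..j. real j + real k)) /
           ((\<Prod>k = 1..j - 1. real j - real k) * (\<Prod>k = 1..j. real i + real k)))"

definition U_mat :: "real \<Rightarrow> nat \<Rightarrow> nat \<Rightarrow> real" where
  "U_mat c i j =
     (if i > j then 0
      else if i = 1 then
        (if c \<le> 1 then pi * (1 + 2 * c * pi) / real (j + 1)
         else pi * (1 + 2 * c * pi) / (c * real (j + 1)))
      else
        (if c \<le> 1 then
           pi * (\<Prod>k = 1..i - 1. (real i - real k) * (real j - real k)) /
           (real (i + j) * (\<Prod>k = 1..i - 1. real i + real k) * (\<Prod>k = 1..i - 1. real j + real k))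
         else
           pi * (\<Prod>k = 1..i - 1. (real i - real k) * (real j - real k)) /
           (c * real (i + j) * (\<Prod>k = 1..i - 1. real i + real k) * (\<Prod>k = 1..i - 1. real j + real k))))"

end

theory Submission
  imports Defs
begin

definition TT :: "real \<Rightarrow> real \<Rightarrow> nat \<Rightarrow> real" where
  "TT x y k = 2 * real k * (\<Prod>m = 1..k - 1. (x - real m) * (y - real m)) /
     ((\<Prod>m = 1..k. x + real m) * (\<Prod>m = 1..k. y + real m))"

definition RR :: "real \<Rightarrow> real \<Rightarrow> nat \<Rightarrow> real" where
  "RR x y N = (\<Prod>m = 1..N. (x - real m) * (y - real m)) /
     ((x + y) * (\<Prod>m = 1..N. x + real m) * (\<Prod>m = 1..N. y + real m))"

lemma tele:
  fixes x y :: real assumes "x > 0" "y > 0"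
  shows "(\<Sum>k = 1..N. TT x y k) = 1 / (x + y) - RR x y N"
proof (induction N)
  case 0
  then show ?case by (simp add: RR_def)
next
  case (Suc N)
  have px: "(\<Prod>m = 1..N. x + real m) > 0" using assms by (intro prod_pos) auto
  have py: "(\<Prod>m = 1..N. y + real m) > 0" using assms by (intro prod_pos) auto
  have alg: "P / ((x + y) * A * B) - P * ((x - n) * (y - n)) / ((x + y) * (A * (x + n)) * (B * (y + n)))
      = 2 * n * P / ((A * (x + n)) * (B * (y + n)))"
    if "A > 0" "B > 0" "n \<ge> 0" for P A B n :: real
  proof -
    have "x + n > 0" "y + n > 0" "x + y > 0" using that assms by auto
    define D where "D = (x + y) * A * B * (x + n) * (y + n)"
    have D: "D \<noteq> 0" using that \<open>x + n > 0\<close> \<open>y + n > 0\<close> \<open>x + y > 0\<close> by (simp add: D_def)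
    have e1: "P / ((x + y) * A * B) = P * (x + n) * (y + n) / D"
      using \<open>x + n > 0\<close> \<open>y + n > 0\<close> by (simp add: D_def)
    have e2: "P * ((x - n) * (y - n)) / ((x + y) * (A * (x + n)) * (B * (y + n))) = P * ((x - n) * (y - n)) / D"
      by (simp add: D_def mult_ac)
    have e3: "2 * n * P / ((A * (x + n)) * (B * (y + n))) = 2 * n * P * (x + y) / D"
    proof -
      have "D = ((A * (x + n)) * (B * (y + n))) * (x + y)" by (simp add: D_def mult_ac)
      then show ?thesis using \<open>x + y > 0\<close> by simp
    qed
    show ?thesis unfolding e1 e2 e3
      by (simp add: diff_divide_distrib[symmetric] algebra_simps)
  qed
  have "RR x y N - RR x y (Suc N) = TT x y (Suc N)"
    unfolding RR_def TT_def prod.cl_ivl_Suc using alg[OF px py, of "real (Suc N)"]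
    by (simp add: prod.distrib)
  then show ?case using Suc by simp
qed

lemma RR_zero:
  assumes "1 \<le> i" "i \<le> N"
  shows "RR (real i) y N = 0"
proof -
  have "(\<Prod>m = 1..N. (real i - real m) * (y - real m)) = 0"
    using assms by (intro prod_zero bexI[of _ i]) auto
  then show ?thesis by (simp add: RR_def)
qed

lemma RR_zero2:
  assumes "1 \<le> j" "j \<le> N"
  shows "RR x (real j) N = 0"
proof -
  have "(\<Prod>m = 1..N. (x - real m) * (real j - real m)) = 0"
    using assms by (intro prod_zero bexI[of _ j]) auto
  then show ?thesis by (simp add: RR_def)
qed


lemma alg_key:
  fixes Pi Pj Pk Kk Qi Qj K S :: real
  assumes "Pk \<noteq> 0" "Kk \<noteq> 0" "Qi \<noteq> 0" "Qj \<noteq> 0" "S \<noteq> 0"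
  shows "Pi * (Kk * (K + K)) / (Pk * Qi) * (Pk * Pj / (S * Kk * Qj))
        = 2 * K * (Pi * Pj) / (Qi * (Qj * S))"
  using assms by (simp add: field_simps)

lemma key:
  fixes c a b :: real
  assumes "1 \<le> i" "1 \<le> j" "1 \<le> k"
    and ab: "(c \<le> 1 \<and> a = pi \<and> b = c * (4 * pi^2)) \<or> (c > 1 \<and> a = pi / c \<and> b = 4 * pi^2)"
  shows "L_mat i k * U_mat c k j = a * TT (real i) (real j) k
          + (if k = 1 then b / (real (i + 1) * real (j + 1)) else 0)"
proof (cases "k > i \<or> k > j")
  case True
  have "TT (real i) (real j) k = 0"
  proof -
    have "(\<Prod>m = 1..k - 1. (real i - real m) * (real j - real m)) = 0"
    proof (cases "k > i")
      case True
      then show ?thesis using assms by (intro prod_zero bexI[of _ i]) auto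
    next
      case False
      then show ?thesis using assms \<open>k > i \<or> k > j\<close> by (intro prod_zero bexI[of _ j]) auto
    qed
    then show ?thesis by (simp add: TT_def)
  qed
  moreover have "L_mat i k * U_mat c k j = 0"
    using True by (auto simp: L_mat_def U_mat_def)
  ultimately show ?thesis using assms True by auto
next
  case False
  hence ki: "k \<le> i" and kj: "k \<le> j" by auto
  show ?thesis
  proof (cases "k = 1")
    case True
    have L: "L_mat i 1 = 2 / (real i + 1)" using ki True by (simp add: L_mat_def)
    have T: "TT (real i) (real j) 1 = 2 / ((real i + 1) * (real j + 1))" by (simp add: TT_def)
    have U: "U_mat c 1 j = (a + b / 2) / (real j + 1)"
    proof (cases "c \<le> 1")
      case True
      then have "a + b / 2 = pi * (1 + 2 * c * pi)" using ab by (simp add: power2_eq_square algebra_simps)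
      then show ?thesis using True kj \<open>k = 1\<close> by (simp add: U_mat_def)
    next
      case False
      then have "a + b / 2 = pi * (1 + 2 * c * pi) / c" using ab by (simp add: power2_eq_square field_simps)
      then show ?thesis using False kj \<open>k = 1\<close> by (simp add: U_mat_def)
    qed
    have g0: "2 / X * ((a + b / 2) / Y) = a * (2 / (X * Y)) + b / (X * Y)"
      if "X \<noteq> 0" "Y \<noteq> 0" for X Y :: real
    proof -
      have "2 / X * ((a + b / 2) / Y) = (2 * a + b) / (X * Y)" using that by (simp add: field_simps)
      also have "\<dots> = a * (2 / (X * Y)) + b / (X * Y)" by (simp add: add_divide_distrib)
      finally show ?thesis .
    qed
    have g: "2 / (x + 1) * ((a + b / 2) / (y + 1)) = a * (2 / ((x + 1) * (y + 1))) + b / ((x + 1) * (y + 1))"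
      if "x \<ge> 0" "y \<ge> 0" for x y :: real
      using g0[of "x + 1" "y + 1"] that by simp
    show ?thesis unfolding True L T U of_nat_add of_nat_1
      using g[of "real i" "real j"] by simp
  next
    case False
    then obtain k' where k': "k = Suc k'" "k' \<ge> 1" using assms by (cases k) auto
    define Pi where "Pi = (\<Prod>m = 1..k'. real i - real m)"
    define Pj where "Pj = (\<Prod>m = 1..k'. real j - real m)"
    define Pk where "Pk = (\<Prod>m = 1..k'. real k - real m)"
    define Kk where "Kk = (\<Prod>m = 1..k'. real k + real m)"
    define Qi where "Qi = (\<Prod>m = 1..k. real i + real m)"
    define Qj where "Qj = (\<Prod>m = 1..k'. real j + real m)"
    have nz: "Pk \<noteq> 0" "Kk \<noteq> 0" "Qi \<noteq> 0" "Qj \<noteq> 0" "real k + real j \<noteq> 0"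
      unfolding Pk_def Kk_def Qi_def Qj_def using k' by (auto simp: prod_zero_iff)
    have L: "L_mat i k = Pi * (Kk * (real k + real k)) / (Pk * Qi)"
      using ki k' by (simp add: L_mat_def Pi_def Kk_def Pk_def Qi_def prod.cl_ivl_Suc)
    have V: "U_mat c k j = a * (Pk * Pj / ((real k + real j) * Kk * Qj))"
      using kj k' ab
      by (auto simp: U_mat_def Pj_def Kk_def Pk_def Qj_def prod.distrib)
    have T: "TT (real i) (real j) k = 2 * real k * (Pi * Pj) / (Qi * (Qj * (real k + real j)))"
      using k' by (simp add: TT_def Pi_def Pj_def Qi_def Qj_def prod.distrib prod.cl_ivl_Suc mult_ac)
    have "L_mat i k * U_mat c k j = a * (Pi * (Kk * (real k + real k)) / (Pk * Qi) * (Pk * Pj / ((real k + real j) * Kk * Qj)))"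
      unfolding L V by (simp add: mult_ac)
    also have "\<dots> = a * TT (real i) (real j) k"
      unfolding T using alg_key[OF nz, where K="real k" and Pi=Pi and Pj=Pj] by simp
    finally show ?thesis using False by simp
  qed
qed

theorem proposition7p11:
  fixes n :: nat and c :: real
  assumes "n \<ge> 2" and "c > 0"
  shows "\<forall>i\<in>{1..n}. \<forall>j\<in>{1..n}.
           Sigma_mat c i j = (\<Sum>k = 1..n. L_mat i k * U_mat c k j)"
proof (intro ballI)
  fix i j assume i: "i \<in> {1..n}" and j: "j \<in> {1..n}"
  obtain a b where ab: "(c \<le> 1 \<and> a = pi \<and> b = c * (4 * pi^2)) \<or> (c > 1 \<and> a = pi / c \<and> b = 4 * pi^2)"
    by (cases "c \<le> 1") auto
  have "(\<Sum>k = 1..n. L_mat i k * U_mat c k j)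
      = (\<Sum>k = 1..n. a * TT (real i) (real j) k
          + (if k = 1 then b / (real (i + 1) * real (j + 1)) else 0))"
    using i j ab by (intro sum.cong refl key) auto
  also have "\<dots> = a * (\<Sum>k = 1..n. TT (real i) (real j) k) + b / (real (i + 1) * real (j + 1))"
    using assms by (simp add: sum.distrib sum_distrib_left)
  also have "(\<Sum>k = 1..n. TT (real i) (real j) k) = 1 / (real i + real j)"
    using tele[of "real i" "real j" n] RR_zero[of i n "real j"] i j by auto
  finally show "Sigma_mat c i j = (\<Sum>k = 1..n. L_mat i k * U_mat c k j)"
    using ab assms by (auto simp: Sigma_mat_def)
qed

end
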